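(* Let $M\cong\mathbb{Z}^n$ be a lattice, $\mathbb{T}=\mathrm{Spec}\,\mathbb{C}[M]$, and identify the automorphism group of the variety $\mathbb{T}$ with $\mathrm{Aut}(\mathbb{T})=\mathbb{T}\rtimes\mathrm{GL}(M)$ (translations by $\mathbb{T}$, and $A\in\mathrm{GL}(M)$ acting via $\chi^m\mapsto\chi^{A(m)}$). Let $\mathbb{W}_1,\mathbb{W}_2$ be finite subgroups of $\mathrm{GL}(M)$ and $G_i=\mathbb{T}\rtimes\mathbb{W}_i\subset\mathrm{Aut}(\mathbb{T})$ with their natural actions on $\mathbb{T}$. The following are equivalent: (a) there exist an isomorphism $\varphi\colon G_1\to G_2$ and a $\varphi$-equivariant biregular map $\Phi\colon\mathbb{T}\to\mathbb{T}$; (b) $G_1$ and $G_2$ are conjugate in $\mathrm{Aut}(\mathbb{T})$; (c) $\mathbb{W}_1$ and $\mathbb{W}_2$ are conjugate in $\mathrm{GL}(M)$.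
   Context: For a group homomorphism $\varphi\colon G_1\to G_2$, a map $\Phi\colon\mathbb{T}\to\mathbb{T}$ is $\varphi$-equivariant if $\Phi(g\cdot x)=\varphi(g)\cdot\Phi(x)$ for all $g\in G_1$, $x\in\mathbb{T}$. *)

theory Defs
  imports "HOL-Analysis.Analysis" "HOL-Algebra.Algebra"
begin

text \<open>The lattice M is int^'n (rank n = CARD('n)). A point of the torus
  T = Spec C[M] is a homomorphism M -> C^*, i.e. a vector of nonzero complex
  numbers x; the character chi^m evaluates to the monomial prod_i x_i^(m_i).\<close>

definition torus :: "(complex ^ 'n :: finite) set" where
  "torus = {x. \<forall>i. x $ i \<noteq> 0}"

definition character :: "int ^ 'n \<Rightarrow> complex ^ 'n \<Rightarrow> complex" where
  "character m x = (\<Prod>i\<in>UNIV. (x $ i) powi (m $ i))"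

definition GLM :: "(int ^ 'n ^ 'n :: finite) monoid" where
  "GLM = \<lparr>carrier = {A. invertible A}, mult = (\<lambda>A B. A ** B), one = mat 1\<rparr>"

text \<open>The automorphism of T induced by A in GL(M): the comorphism sends chi^m to
  chi^(A m); on points x (as characters of M) it is x |-> x o A, i.e. the
  j-th coordinate is chi^(A e_j)(x).\<close>
definition lin_act :: "int ^ 'n ^ 'n \<Rightarrow> complex ^ 'n \<Rightarrow> complex ^ 'n :: finite" where
  "lin_act A x = (\<chi> j. character (column j A) x)"

definition aut_elem :: "complex ^ 'n \<Rightarrow> int ^ 'n ^ 'n \<Rightarrow> complex ^ 'n \<Rightarrow> complex ^ 'n :: finite" where
  "aut_elem t A = (\<lambda>x\<in>torus. t * lin_act A x)"

definition semidir :: "(int ^ 'n ^ 'n :: finite) set \<Rightarrow> (complex ^ 'n \<Rightarrow> complex ^ 'n) set" where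
  "semidir W = {aut_elem t A | t A. t \<in> torus \<and> A \<in> W}"

definition AutT :: "(complex ^ 'n :: finite \<Rightarrow> complex ^ 'n) set" where
  "AutT = semidir (carrier GLM)"

abbreviation BT :: "(complex ^ 'n :: finite \<Rightarrow> complex ^ 'n) monoid" where
  "BT \<equiv> BijGroup torus"

definition grp_of :: "(complex ^ 'n :: finite \<Rightarrow> complex ^ 'n) set \<Rightarrow> (complex ^ 'n \<Rightarrow> complex ^ 'n) monoid" where
  "grp_of G = BT\<lparr>carrier := G\<rparr>"

end

theory Submission
  imports Defs
begin

lemma prod_powi: "(\<Prod>i\<in>A. f i :: complex) powi n = (\<Prod>i\<in>A. f i powi n)"
  by (induction A rule: infinite_finite_induct) (auto simp: power_int_mult_distrib)

lemma powi_sum: "(x::complex) \<noteq> 0 \<Longrightarrow> x powi (\<Sum>i\<in>A. f i) = (\<Prod>i\<in>A. x powi f i)"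
  by (induction A rule: infinite_finite_induct) (auto simp: power_int_add)

lemma torus_mem: "x \<in> torus \<longleftrightarrow> (\<forall>i. x $ i \<noteq> 0)" by (simp add: torus_def)

lemma lin_act_comp: "lin_act A x $ j = (\<Prod>i\<in>UNIV. (x $ i) powi (A $ i $ j))"
  by (simp add: lin_act_def character_def column_def)

lemma lin_act_torus: "x \<in> torus \<Longrightarrow> lin_act A x \<in> torus"
  by (simp add: torus_mem lin_act_comp)

lemma mult_torus: "x \<in> torus \<Longrightarrow> y \<in> torus \<Longrightarrow> x * y \<in> torus"
  by (simp add: torus_mem)

lemma one_torus: "1 \<in> torus" by (simp add: torus_mem)

lemma lin_act_mult: "lin_act A (x * y) = lin_act A x * lin_act A y"
  by (simp add: vec_eq_iff lin_act_comp power_int_mult_distrib prod.distrib)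

lemma lin_act_one: "lin_act A 1 = 1"
  by (simp add: vec_eq_iff lin_act_comp)

lemma lin_act_id: "lin_act (mat 1) x = x"
proof -
  have "lin_act (mat 1) x $ j = x $ j" for j
  proof -
    have "lin_act (mat 1) x $ j = (\<Prod>i\<in>UNIV. (x $ i) powi (if i = j then 1 else 0))"
      by (simp add: lin_act_comp mat_def)
    also have "\<dots> = (\<Prod>i\<in>UNIV. if i = j then x $ i else 1)"
      by (rule prod.cong) auto
    also have "\<dots> = x $ j" by (simp add: prod.delta)
    finally show ?thesis .
  qed
  then show ?thesis by (simp add: vec_eq_iff)
qed

lemma lin_act_lin_act: "x \<in> torus \<Longrightarrow> lin_act A (lin_act B x) = lin_act (B ** A) x"
proof -
  assume x: "x \<in> torus"
  have "lin_act A (lin_act B x) $ j = lin_act (B ** A) x $ j" for j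
  proof -
    have "lin_act A (lin_act B x) $ j = (\<Prod>i\<in>UNIV. \<Prod>k\<in>UNIV. (x $ k) powi (B $ k $ i * A $ i $ j))"
      by (simp add: lin_act_comp prod_powi power_int_mult)
    also have "\<dots> = (\<Prod>k\<in>UNIV. \<Prod>i\<in>UNIV. (x $ k) powi (B $ k $ i * A $ i $ j))"
      by (rule prod.swap)
    also have "\<dots> = (\<Prod>k\<in>UNIV. (x $ k) powi (\<Sum>i\<in>UNIV. B $ k $ i * A $ i $ j))"
      using x by (simp add: powi_sum torus_mem)
    also have "\<dots> = lin_act (B ** A) x $ j"
      by (simp add: lin_act_comp matrix_matrix_mult_def)
    finally show ?thesis .
  qed
  then show ?thesis by (simp add: vec_eq_iff)
qed

lemma powi2_inj: "(2::complex) powi a = 2 powi b \<Longrightarrow> a = b"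
proof -
  assume h: "(2::complex) powi a = 2 powi b"
  have "complex_of_real (2 powi a) = complex_of_real (2 powi b)" using h by simp
  then have "(2::real) powi a = 2 powi b" by (simp only: of_real_eq_iff)
  then have "(2::real) powr a = 2 powr b" by (simp add: powr_real_of_int')
  then have "real_of_int a = real_of_int b" by (simp add: powr_inj)
  then show "a = b" by simp
qed


lemma inv_GLM:
  fixes P Q :: "int ^ 'n ^ 'n :: finite"
  assumes "P ** Q = mat 1" "Q ** P = mat 1"
  shows "inv\<^bsub>GLM\<^esub> P = Q"
  unfolding m_inv_def GLM_def
proof (simp, rule the_equality)
  show "invertible Q \<and> P ** Q = mat 1 \<and> Q ** P = mat 1"
    using assms invertible_def by blast
next
  fix y assume "invertible y \<and> P ** y = mat 1 \<and> y ** P = mat 1"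
  then have "y ** P = mat 1" by simp
  have "y = y ** (P ** Q)" using assms by simp
  also have "\<dots> = (y ** P) ** Q" by (rule matrix_mul_assoc)
  finally show "y = Q" using \<open>y ** P = mat 1\<close> by simp
qed

lemma aut_elem_app: "x \<in> torus \<Longrightarrow> aut_elem t A x = t * lin_act A x"
  by (simp add: aut_elem_def)

lemma aut_elem_torus: "t \<in> torus \<Longrightarrow> x \<in> torus \<Longrightarrow> aut_elem t A x \<in> torus"
  by (simp add: aut_elem_app mult_torus lin_act_torus)

lemma aut_elem_comp_pt:
  assumes "t \<in> torus" "u \<in> torus" "x \<in> torus"
  shows "aut_elem t A (aut_elem u B x) = aut_elem (t * lin_act A u) (B ** A) x"
proof -
  have "aut_elem u B x \<in> torus" using assms aut_elem_torus by blast
  then show ?thesis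
  using assms by (simp add: aut_elem_app aut_elem_torus lin_act_mult lin_act_lin_act mult.assoc)
qed

lemma aut_elem_ext: "aut_elem t A \<in> extensional torus"
  by (simp add: aut_elem_def)

definition vinv :: "complex ^ 'n \<Rightarrow> complex ^ 'n :: finite" where
  "vinv t = (\<chi> i. inverse (t $ i))"

lemma vinv_torus: "t \<in> torus \<Longrightarrow> vinv t \<in> torus"
  by (simp add: vinv_def torus_mem)

lemma vinv_mult: "t \<in> torus \<Longrightarrow> t * vinv t = 1"
  by (simp add: vinv_def torus_mem vec_eq_iff)

lemma vinv_one: "vinv 1 = 1"
  by (simp add: vinv_def vec_eq_iff)

lemma aut_elem_Bij:
  fixes A :: "int ^ 'n ^ 'n :: finite"
  assumes t: "t \<in> torus" and A: "invertible A"
  shows "aut_elem t A \<in> Bij torus"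
proof -
  obtain Ai where AAi: "A ** Ai = mat 1" and AiA: "Ai ** A = mat 1"
    using A invertible_def by blast
  define u where "u = lin_act Ai (vinv t)"
  have u: "u \<in> torus" using t by (simp add: u_def lin_act_torus vinv_torus)
  have "bij_betw (aut_elem t A) torus torus"
  proof (rule bij_betw_byWitness[where f' = "aut_elem u Ai"])
    show "\<forall>x\<in>torus. aut_elem u Ai (aut_elem t A x) = x"
    proof
      fix x :: "complex ^ 'n" assume x: "x \<in> torus"
      have "aut_elem u Ai (aut_elem t A x) = (u * lin_act Ai t) * lin_act (A ** Ai) x"
        using aut_elem_comp_pt[OF u t x] aut_elem_app[OF x] by metis
      also have "u * lin_act Ai t = 1"
        by (simp add: u_def flip: lin_act_mult) (simp add: mult.commute t vinv_mult lin_act_one)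
      finally show "aut_elem u Ai (aut_elem t A x) = x" by (simp add: AAi lin_act_id)
    qed
    show "\<forall>x\<in>torus. aut_elem t A (aut_elem u Ai x) = x"
    proof
      fix x :: "complex ^ 'n" assume x: "x \<in> torus"
      have "aut_elem t A (aut_elem u Ai x) = (t * lin_act A u) * lin_act (Ai ** A) x"
        using aut_elem_comp_pt[OF t u x] aut_elem_app[OF x] by metis
      also have "t * lin_act A u = 1"
        using t by (simp add: u_def lin_act_lin_act vinv_torus AiA lin_act_id vinv_mult)
      finally show "aut_elem t A (aut_elem u Ai x) = x" by (simp add: AiA lin_act_id)
    qed
    show "aut_elem t A ` torus \<subseteq> torus" using t aut_elem_torus by blast
    show "aut_elem u Ai ` torus \<subseteq> torus" using u aut_elem_torus by blast
  qed
  then show ?thesis by (simp add: Bij_def aut_elem_ext)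
qed

lemma BT_mult_app:
  "f \<in> Bij S \<Longrightarrow> g \<in> Bij S \<Longrightarrow> x \<in> S \<Longrightarrow> (f \<otimes>\<^bsub>BijGroup S\<^esub> g) x = f (g x)"
  by (simp add: BijGroup_def compose_def)

lemma BT_mult_carrier:
  "f \<in> Bij S \<Longrightarrow> g \<in> Bij S \<Longrightarrow> f \<otimes>\<^bsub>BijGroup S\<^esub> g \<in> extensional S"
  by (simp add: BijGroup_def compose_def)

lemma aut_elem_eqI:
  assumes "\<forall>x\<in>torus. f x = aut_elem t A x" "f \<in> extensional torus"
  shows "f = aut_elem t A"
  using assms aut_elem_ext extensionalityI by metis

lemma aut_elem_mult:
  assumes "t \<in> torus" "u \<in> torus" "invertible A" "invertible B"
  shows "aut_elem t A \<otimes>\<^bsub>BT\<^esub> aut_elem u B = aut_elem (t * lin_act A u) (B ** A)"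
  using assms by (intro aut_elem_eqI)
    (simp_all add: BT_mult_app aut_elem_Bij aut_elem_comp_pt BT_mult_carrier)

lemma aut_elem_one: "\<one>\<^bsub>BT\<^esub> = aut_elem 1 (mat 1)"
  by (simp add: BijGroup_def aut_elem_def lin_act_id)

lemma aut_elem_unique:
  fixes A A' :: "int ^ 'n ^ 'n :: finite"
  assumes t: "t \<in> torus" and t': "t' \<in> torus" and eq: "aut_elem t A = aut_elem t' A'"
  shows "t = t' \<and> A = A'"
proof -
  have tt: "t = t'" using fun_cong[OF eq, of 1] one_torus by (simp add: aut_elem_app lin_act_one one_torus)
  have L: "lin_act A x = lin_act A' x" if x: "x \<in> torus" for x
  proof -
    have "t * lin_act A x = t * lin_act A' x" using fun_cong[OF eq, of x] x tt by (simp add: aut_elem_app)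
    then have "vinv t * (t * lin_act A x) = vinv t * (t * lin_act A' x)" by simp
    then show ?thesis using t vinv_mult[OF t] by (simp add: mult.assoc[symmetric] mult.commute)
  qed
  have "A $ i $ j = A' $ i $ j" for i j
  proof -
    define x :: "complex ^ 'n" where "x = (\<chi> k. if k = i then 2 else 1)"
    have x: "x \<in> torus" by (simp add: x_def torus_mem)
    have pr: "lin_act B x $ j = 2 powi (B $ i $ j)" for B :: "int ^ 'n ^ 'n"
    proof -
      have "lin_act B x $ j = (\<Prod>k\<in>UNIV. if k = i then 2 powi (B $ i $ j) else 1)"
        unfolding lin_act_comp by (rule prod.cong) (auto simp: x_def)
      then show ?thesis by (simp add: prod.delta)
    qed
    show ?thesis using L[OF x] pr[of A] pr[of A'] powi2_inj by metis
  qed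
  then show ?thesis using tt by (simp add: vec_eq_iff)
qed


lemma part_ab:
  fixes S :: "'a set"
  defines "B \<equiv> BijGroup S"
  assumes G1: "G1 \<subseteq> carrier B" and G2: "G2 \<subseteq> carrier B" and H: "H \<subseteq> carrier B"
  shows "(\<exists>\<phi> \<Phi>. \<phi> \<in> iso (B\<lparr>carrier := G1\<rparr>) (B\<lparr>carrier := G2\<rparr>) \<and> \<Phi> \<in> H
            \<and> (\<forall>g\<in>G1. \<forall>x\<in>S. \<Phi> (g x) = \<phi> g (\<Phi> x)))
         \<longleftrightarrow> (\<exists>h\<in>H. G2 = (\<lambda>g. h \<otimes>\<^bsub>B\<^esub> g \<otimes>\<^bsub>B\<^esub> inv\<^bsub>B\<^esub> h) ` G1)"
proof -
  interpret grp: group B unfolding B_def by (rule group_BijGroup)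
  have app: "(f \<otimes>\<^bsub>B\<^esub> g) x = f (g x)" if "f \<in> carrier B" "g \<in> carrier B" "x \<in> S" for f g x
    using that by (simp add: B_def BijGroup_def compose_def)
  have ext: "f \<in> carrier B \<Longrightarrow> f \<in> extensional S" for f by (simp add: B_def BijGroup_def Bij_def)
  show ?thesis
  proof
    assume "\<exists>\<phi> \<Phi>. \<phi> \<in> iso (B\<lparr>carrier := G1\<rparr>) (B\<lparr>carrier := G2\<rparr>) \<and> \<Phi> \<in> H
            \<and> (\<forall>g\<in>G1. \<forall>x\<in>S. \<Phi> (g x) = \<phi> g (\<Phi> x))"
    then obtain \<phi> \<Phi> where iso: "\<phi> \<in> iso (B\<lparr>carrier := G1\<rparr>) (B\<lparr>carrier := G2\<rparr>)"
      and PH: "\<Phi> \<in> H" and eqv: "\<forall>g\<in>G1. \<forall>x\<in>S. \<Phi> (g x) = \<phi> g (\<Phi> x)" by blast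
    have bij: "bij_betw \<phi> G1 G2" using iso by (simp add: iso_def)
    have Pc: "\<Phi> \<in> carrier B" using PH H by blast
    have key: "\<phi> g = \<Phi> \<otimes>\<^bsub>B\<^esub> g \<otimes>\<^bsub>B\<^esub> inv\<^bsub>B\<^esub> \<Phi>" if g: "g \<in> G1" for g
    proof -
      have gc: "g \<in> carrier B" using g G1 by blast
      have pg: "\<phi> g \<in> carrier B" using bij g G2 bij_betwE by blast
      have "\<Phi> \<otimes>\<^bsub>B\<^esub> g = \<phi> g \<otimes>\<^bsub>B\<^esub> \<Phi>"
      proof (rule extensionalityI[of _ S])
        show "\<Phi> \<otimes>\<^bsub>B\<^esub> g \<in> extensional S" using Pc gc ext by blast
        show "\<phi> g \<otimes>\<^bsub>B\<^esub> \<Phi> \<in> extensional S" using Pc pg ext by blast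
        fix x assume "x \<in> S"
        then show "(\<Phi> \<otimes>\<^bsub>B\<^esub> g) x = (\<phi> g \<otimes>\<^bsub>B\<^esub> \<Phi>) x"
          using app Pc gc pg eqv g by simp
      qed
      then show ?thesis using Pc gc pg
        by (metis grp.inv_solve_right grp.m_closed)
    qed
    have "G2 = \<phi> ` G1" using bij by (simp add: bij_betw_def)
    also have "\<dots> = (\<lambda>g. \<Phi> \<otimes>\<^bsub>B\<^esub> g \<otimes>\<^bsub>B\<^esub> inv\<^bsub>B\<^esub> \<Phi>) ` G1"
      using key by (rule image_cong[OF refl])
    finally show "\<exists>h\<in>H. G2 = (\<lambda>g. h \<otimes>\<^bsub>B\<^esub> g \<otimes>\<^bsub>B\<^esub> inv\<^bsub>B\<^esub> h) ` G1" using PH by blast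
  next
    assume "\<exists>h\<in>H. G2 = (\<lambda>g. h \<otimes>\<^bsub>B\<^esub> g \<otimes>\<^bsub>B\<^esub> inv\<^bsub>B\<^esub> h) ` G1"
    then obtain h where hH: "h \<in> H" and G2eq: "G2 = (\<lambda>g. h \<otimes>\<^bsub>B\<^esub> g \<otimes>\<^bsub>B\<^esub> inv\<^bsub>B\<^esub> h) ` G1" by blast
    have hc: "h \<in> carrier B" using hH H by blast
    define \<phi> where "\<phi> = (\<lambda>g. h \<otimes>\<^bsub>B\<^esub> g \<otimes>\<^bsub>B\<^esub> inv\<^bsub>B\<^esub> h)"
    have canc: "inv\<^bsub>B\<^esub> h \<otimes>\<^bsub>B\<^esub> (h \<otimes>\<^bsub>B\<^esub> z) = z" if "z \<in> carrier B" for z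
      using that hc by (simp add: grp.m_assoc[symmetric])
    have hom: "\<phi> (x \<otimes>\<^bsub>B\<^esub> y) = \<phi> x \<otimes>\<^bsub>B\<^esub> \<phi> y" if "x \<in> carrier B" "y \<in> carrier B" for x y
      using that hc by (simp add: \<phi>_def grp.m_assoc canc)
    have inj: "inj_on \<phi> G1"
    proof
      fix x y assume "x \<in> G1" "y \<in> G1" "\<phi> x = \<phi> y"
      then have xc: "x \<in> carrier B" and yc: "y \<in> carrier B" and e: "\<phi> x = \<phi> y" using G1 by auto
      then have "h \<otimes>\<^bsub>B\<^esub> x = h \<otimes>\<^bsub>B\<^esub> y" using hc xc yc e unfolding \<phi>_def by (meson grp.r_cancel grp.m_closed grp.inv_closed)
      then show "x = y" using hc xc yc by (meson grp.l_cancel)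
    qed
    have iso: "\<phi> \<in> iso (B\<lparr>carrier := G1\<rparr>) (B\<lparr>carrier := G2\<rparr>)"
      unfolding iso_def hom_def using G2eq inj hom G1
      by (auto simp: \<phi>_def bij_betw_def)
    have eqv: "\<forall>g\<in>G1. \<forall>x\<in>S. h (g x) = \<phi> g (h x)"
    proof (intro ballI)
      fix g x assume g: "g \<in> G1" and x: "x \<in> S"
      have gc: "g \<in> carrier B" using g G1 by blast
      have "\<phi> g \<otimes>\<^bsub>B\<^esub> h = h \<otimes>\<^bsub>B\<^esub> g" using hc gc by (simp add: \<phi>_def grp.m_assoc)
      then have "(\<phi> g \<otimes>\<^bsub>B\<^esub> h) x = (h \<otimes>\<^bsub>B\<^esub> g) x" by simp
      then show "h (g x) = \<phi> g (h x)" using app hc gc x by (simp add: \<phi>_def)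
    qed
    show "\<exists>\<phi> \<Phi>. \<phi> \<in> iso (B\<lparr>carrier := G1\<rparr>) (B\<lparr>carrier := G2\<rparr>) \<and> \<Phi> \<in> H
            \<and> (\<forall>g\<in>G1. \<forall>x\<in>S. \<Phi> (g x) = \<phi> g (\<Phi> x))"
      using iso hH eqv by blast
  qed
qed


lemma aut_elem_inv:
  assumes s: "s \<in> torus" and PPv: "P ** Pv = mat 1" and PvP: "Pv ** P = mat 1"
  shows "inv\<^bsub>BT\<^esub> (aut_elem s P) = aut_elem (lin_act Pv (vinv s)) Pv"
proof (rule group.inv_equality[OF group_BijGroup])
  have iP: "invertible P" "invertible Pv" using PPv PvP invertible_def by blast+
  have v: "lin_act Pv (vinv s) \<in> torus" using s by (simp add: lin_act_torus vinv_torus)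
  have "lin_act Pv (vinv s) * lin_act Pv s = 1"
    using s by (simp flip: lin_act_mult add: mult.commute vinv_mult lin_act_one)
  then show "aut_elem (lin_act Pv (vinv s)) Pv \<otimes>\<^bsub>BT\<^esub> aut_elem s P = \<one>\<^bsub>BT\<^esub>"
    using v s iP by (simp add: aut_elem_mult aut_elem_one PPv)
  show "aut_elem s P \<in> carrier BT" using s iP by (simp add: aut_elem_Bij BijGroup_def)
  show "aut_elem (lin_act Pv (vinv s)) Pv \<in> carrier BT" using v iP by (simp add: aut_elem_Bij BijGroup_def)
qed

lemma conj_formula:
  assumes s: "s \<in> torus" and t: "t \<in> torus" and PPv: "P ** Pv = mat 1" and PvP: "Pv ** P = mat 1"
    and A: "invertible A"
  shows "aut_elem s P \<otimes>\<^bsub>BT\<^esub> aut_elem t A \<otimes>\<^bsub>BT\<^esub> inv\<^bsub>BT\<^esub> (aut_elem s P)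
       = aut_elem (s * lin_act P t * lin_act (A ** P) (lin_act Pv (vinv s))) (Pv ** (A ** P))"
    and "s * lin_act P t * lin_act (A ** P) (lin_act Pv (vinv s)) \<in> torus"
proof -
  have iP: "invertible P" "invertible Pv" using PPv PvP invertible_def by blast+
  have v: "lin_act Pv (vinv s) \<in> torus" using s by (simp add: lin_act_torus vinv_torus)
  have AP: "invertible (A ** P)" using A iP invertible_mult by blast
  show "aut_elem s P \<otimes>\<^bsub>BT\<^esub> aut_elem t A \<otimes>\<^bsub>BT\<^esub> inv\<^bsub>BT\<^esub> (aut_elem s P)
       = aut_elem (s * lin_act P t * lin_act (A ** P) (lin_act Pv (vinv s))) (Pv ** (A ** P))"
    using s t v iP AP A by (simp add: aut_elem_inv[OF s PPv PvP] aut_elem_mult mult_torus lin_act_torus)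
  show "s * lin_act P t * lin_act (A ** P) (lin_act Pv (vinv s)) \<in> torus"
    using s t v by (simp add: mult_torus lin_act_torus)
qed

lemma semidir_carrier: "W \<subseteq> carrier GLM \<Longrightarrow> semidir W \<subseteq> carrier BT"
  by (auto simp: semidir_def GLM_def BijGroup_def aut_elem_Bij)

lemma conj_bc:
  fixes W1 W2 :: "(int ^ 'n ^ 'n :: finite) set"
  assumes W1: "W1 \<subseteq> carrier GLM" and W2: "W2 \<subseteq> carrier GLM"
  shows "(\<exists>h\<in>AutT. semidir W2 = (\<lambda>g. h \<otimes>\<^bsub>BT\<^esub> g \<otimes>\<^bsub>BT\<^esub> inv\<^bsub>BT\<^esub> h) ` semidir W1)
          \<longleftrightarrow> (\<exists>P\<in>carrier GLM. W2 = (\<lambda>A. P \<otimes>\<^bsub>GLM\<^esub> A \<otimes>\<^bsub>GLM\<^esub> inv\<^bsub>GLM\<^esub> P) ` W1)"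
proof
  assume "\<exists>h\<in>AutT. semidir W2 = (\<lambda>g. h \<otimes>\<^bsub>BT\<^esub> g \<otimes>\<^bsub>BT\<^esub> inv\<^bsub>BT\<^esub> h) ` semidir W1"
  then obtain h where hA: "h \<in> AutT" and eq: "semidir W2 = (\<lambda>g. h \<otimes>\<^bsub>BT\<^esub> g \<otimes>\<^bsub>BT\<^esub> inv\<^bsub>BT\<^esub> h) ` semidir W1"
    by blast
  obtain s P where s: "s \<in> torus" and P: "invertible P" and h: "h = aut_elem s P"
    using hA by (auto simp: AutT_def semidir_def GLM_def)
  obtain Pv where PPv: "P ** Pv = mat 1" and PvP: "Pv ** P = mat 1" using P invertible_def by blast
  have Pvc: "Pv \<in> carrier GLM" using PPv PvP invertible_def by (auto simp: GLM_def)
  have invPv: "inv\<^bsub>GLM\<^esub> Pv = P" using inv_GLM[OF PvP PPv] .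
  have W1i: "A \<in> W1 \<Longrightarrow> invertible A" for A using W1 by (auto simp: GLM_def)
  have W2i: "A \<in> W2 \<Longrightarrow> invertible A" for A using W2 by (auto simp: GLM_def)
  have "W2 = (\<lambda>A. Pv ** A ** P) ` W1"
  proof
    show "W2 \<subseteq> (\<lambda>A. Pv ** A ** P) ` W1"
    proof
      fix B assume B: "B \<in> W2"
      then have "aut_elem 1 B \<in> semidir W2" using one_torus by (auto simp: semidir_def)
      then have "aut_elem 1 B \<in> (\<lambda>g. h \<otimes>\<^bsub>BT\<^esub> g \<otimes>\<^bsub>BT\<^esub> inv\<^bsub>BT\<^esub> h) ` semidir W1"
        using eq by simp
      then obtain g where g: "g \<in> semidir W1"
        and e0: "aut_elem 1 B = h \<otimes>\<^bsub>BT\<^esub> g \<otimes>\<^bsub>BT\<^esub> inv\<^bsub>BT\<^esub> h" by blast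
      then obtain t A where t: "t \<in> torus" and A: "A \<in> W1" and "g = aut_elem t A"
        by (auto simp: semidir_def)
      then have e: "aut_elem 1 B = h \<otimes>\<^bsub>BT\<^esub> aut_elem t A \<otimes>\<^bsub>BT\<^esub> inv\<^bsub>BT\<^esub> h" using e0 by simp
      then have "B = Pv ** (A ** P)"
        using conj_formula[OF s t PPv PvP W1i[OF A]] aut_elem_unique one_torus h by metis
      then show "B \<in> (\<lambda>A. Pv ** A ** P) ` W1" using A by (auto simp: matrix_mul_assoc)
    qed
    show "(\<lambda>A. Pv ** A ** P) ` W1 \<subseteq> W2"
    proof
      fix C assume "C \<in> (\<lambda>A. Pv ** A ** P) ` W1"
      then obtain A where A: "A \<in> W1" and C: "C = Pv ** A ** P" by blast
      have "h \<otimes>\<^bsub>BT\<^esub> aut_elem 1 A \<otimes>\<^bsub>BT\<^esub> inv\<^bsub>BT\<^esub> h \<in> semidir W2"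
        using eq A one_torus by (auto simp: semidir_def)
      then obtain t B where t: "t \<in> torus" and B: "B \<in> W2"
        and e: "h \<otimes>\<^bsub>BT\<^esub> aut_elem 1 A \<otimes>\<^bsub>BT\<^esub> inv\<^bsub>BT\<^esub> h = aut_elem t B"
        by (auto simp: semidir_def)
      then have "B = Pv ** (A ** P)"
        using conj_formula[OF s one_torus PPv PvP W1i[OF A]] aut_elem_unique h by metis
      then show "C \<in> W2" using B C by (simp add: matrix_mul_assoc)
    qed
  qed
  then show "\<exists>P\<in>carrier GLM. W2 = (\<lambda>A. P \<otimes>\<^bsub>GLM\<^esub> A \<otimes>\<^bsub>GLM\<^esub> inv\<^bsub>GLM\<^esub> P) ` W1"
    using Pvc invPv by (intro bexI[of _ Pv]) (auto simp: GLM_def)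
next
  assume "\<exists>P\<in>carrier GLM. W2 = (\<lambda>A. P \<otimes>\<^bsub>GLM\<^esub> A \<otimes>\<^bsub>GLM\<^esub> inv\<^bsub>GLM\<^esub> P) ` W1"
  then obtain P where Pc: "P \<in> carrier GLM" and eq: "W2 = (\<lambda>A. P \<otimes>\<^bsub>GLM\<^esub> A \<otimes>\<^bsub>GLM\<^esub> inv\<^bsub>GLM\<^esub> P) ` W1"
    by blast
  obtain Q where PQ: "P ** Q = mat 1" and QP: "Q ** P = mat 1" using Pc invertible_def by (auto simp: GLM_def)
  have iQ: "invertible Q" using PQ QP invertible_def by blast
  have eq': "W2 = (\<lambda>A. P ** A ** Q) ` W1" using eq inv_GLM[OF PQ QP] by (simp add: GLM_def)
  have W1i: "A \<in> W1 \<Longrightarrow> invertible A" for A using W1 by (auto simp: GLM_def)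
  define h where "h = aut_elem 1 Q"
  have hA: "h \<in> AutT" using one_torus iQ by (auto simp: h_def AutT_def semidir_def GLM_def)
  have cf: "h \<otimes>\<^bsub>BT\<^esub> aut_elem t A \<otimes>\<^bsub>BT\<^esub> inv\<^bsub>BT\<^esub> h = aut_elem (lin_act Q t) (P ** A ** Q)"
    if t: "t \<in> torus" and A: "invertible A" for t A
    using conj_formula(1)[OF one_torus t QP PQ A]
    by (simp add: h_def vinv_one lin_act_one matrix_mul_assoc)
  have "semidir W2 = (\<lambda>g. h \<otimes>\<^bsub>BT\<^esub> g \<otimes>\<^bsub>BT\<^esub> inv\<^bsub>BT\<^esub> h) ` semidir W1"
  proof
    show "semidir W2 \<subseteq> (\<lambda>g. h \<otimes>\<^bsub>BT\<^esub> g \<otimes>\<^bsub>BT\<^esub> inv\<^bsub>BT\<^esub> h) ` semidir W1"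
    proof
      fix g assume "g \<in> semidir W2"
      then obtain \<tau> B where \<tau>: "\<tau> \<in> torus" and B: "B \<in> W2" and g: "g = aut_elem \<tau> B"
        by (auto simp: semidir_def)
      obtain A where A: "A \<in> W1" and BA: "B = P ** A ** Q" using B eq' by blast
      have t: "lin_act P \<tau> \<in> torus" using \<tau> by (simp add: lin_act_torus)
      have "lin_act Q (lin_act P \<tau>) = \<tau>" using \<tau> by (simp add: lin_act_lin_act PQ lin_act_id)
      then have "g = h \<otimes>\<^bsub>BT\<^esub> aut_elem (lin_act P \<tau>) A \<otimes>\<^bsub>BT\<^esub> inv\<^bsub>BT\<^esub> h"
        using cf[OF t W1i[OF A]] g BA by simp
      moreover have "aut_elem (lin_act P \<tau>) A \<in> semidir W1" using t A by (auto simp: semidir_def)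
      ultimately show "g \<in> (\<lambda>g. h \<otimes>\<^bsub>BT\<^esub> g \<otimes>\<^bsub>BT\<^esub> inv\<^bsub>BT\<^esub> h) ` semidir W1" by blast
    qed
    show "(\<lambda>g. h \<otimes>\<^bsub>BT\<^esub> g \<otimes>\<^bsub>BT\<^esub> inv\<^bsub>BT\<^esub> h) ` semidir W1 \<subseteq> semidir W2"
    proof
      fix g assume "g \<in> (\<lambda>g. h \<otimes>\<^bsub>BT\<^esub> g \<otimes>\<^bsub>BT\<^esub> inv\<^bsub>BT\<^esub> h) ` semidir W1"
      then obtain t A where t: "t \<in> torus" and A: "A \<in> W1"
        and g: "g = h \<otimes>\<^bsub>BT\<^esub> aut_elem t A \<otimes>\<^bsub>BT\<^esub> inv\<^bsub>BT\<^esub> h"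
        by (auto simp: semidir_def)
      have "g = aut_elem (lin_act Q t) (P ** A ** Q)" using g cf[OF t W1i[OF A]] by simp
      moreover have "P ** A ** Q \<in> W2" using eq' A by blast
      moreover have "lin_act Q t \<in> torus" using t by (simp add: lin_act_torus)
      ultimately show "g \<in> semidir W2" by (auto simp: semidir_def)
    qed
  qed
  then show "\<exists>h\<in>AutT. semidir W2 = (\<lambda>g. h \<otimes>\<^bsub>BT\<^esub> g \<otimes>\<^bsub>BT\<^esub> inv\<^bsub>BT\<^esub> h) ` semidir W1"
    using hA by blast
qed

theorem lemma3p1:
  fixes W1 W2 :: "(int ^ 'n ^ 'n :: finite) set"
  assumes "subgroup W1 GLM" and "finite W1"
      and "subgroup W2 GLM" and "finite W2"
  shows "((\<exists>\<phi> \<Phi>. \<phi> \<in> iso (grp_of (semidir W1)) (grp_of (semidir W2))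
              \<and> \<Phi> \<in> AutT
              \<and> (\<forall>g\<in>semidir W1. \<forall>x\<in>torus. \<Phi> (g x) = \<phi> g (\<Phi> x)))
          \<longleftrightarrow> (\<exists>h\<in>AutT. semidir W2 = (\<lambda>g. h \<otimes>\<^bsub>BT\<^esub> g \<otimes>\<^bsub>BT\<^esub> inv\<^bsub>BT\<^esub> h) ` semidir W1))
       \<and> ((\<exists>h\<in>AutT. semidir W2 = (\<lambda>g. h \<otimes>\<^bsub>BT\<^esub> g \<otimes>\<^bsub>BT\<^esub> inv\<^bsub>BT\<^esub> h) ` semidir W1)
          \<longleftrightarrow> (\<exists>P\<in>carrier GLM. W2 = (\<lambda>A. P \<otimes>\<^bsub>GLM\<^esub> A \<otimes>\<^bsub>GLM\<^esub> inv\<^bsub>GLM\<^esub> P) ` W1))"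
proof
  have W1: "W1 \<subseteq> carrier GLM" and W2: "W2 \<subseteq> carrier GLM"
    using assms subgroup.subset by blast+
  show "(\<exists>\<phi> \<Phi>. \<phi> \<in> iso (grp_of (semidir W1)) (grp_of (semidir W2))
              \<and> \<Phi> \<in> AutT
              \<and> (\<forall>g\<in>semidir W1. \<forall>x\<in>torus. \<Phi> (g x) = \<phi> g (\<Phi> x)))
          \<longleftrightarrow> (\<exists>h\<in>AutT. semidir W2 = (\<lambda>g. h \<otimes>\<^bsub>BT\<^esub> g \<otimes>\<^bsub>BT\<^esub> inv\<^bsub>BT\<^esub> h) ` semidir W1)"
    unfolding grp_of_def
    by (rule part_ab[OF semidir_carrier[OF W1] semidir_carrier[OF W2]])
       (simp add: AutT_def semidir_carrier GLM_def)
  show "(\<exists>h\<in>AutT. semidir W2 = (\<lambda>g. h \<otimes>\<^bsub>BT\<^esub> g \<otimes>\<^bsub>BT\<^esub> inv\<^bsub>BT\<^esub> h) ` semidir W1)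
          \<longleftrightarrow> (\<exists>P\<in>carrier GLM. W2 = (\<lambda>A. P \<otimes>\<^bsub>GLM\<^esub> A \<otimes>\<^bsub>GLM\<^esub> inv\<^bsub>GLM\<^esub> P) ` W1)"
    by (rule conj_bc[OF W1 W2])
qed

end
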